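(* Fix $R>0$ and an integer $k\ge2$. There exist a sequence $(\mathbb{X}_n,d_n,\nu_n)_{n\in\mathbb{N}}$ of complete separable metric spaces with locally finite Borel measures satisfying Assumption (A), pure $k$-body repulsive symmetric potentials $\phi^{(n)}$ on $\mathbb{X}_n$ of range at most $R$, bounded measurable sets $\Lambda_n\subseteq\mathbb{X}_n$, and reals $\lambda_n>0$, such that (1) $B_R^{(n)}:=\sup_{x\in\mathbb{X}_n}\nu_n(\{y\in\mathbb{X}_n: d_n(x,y)\le R\})$ satisfies $B_R^{(n)}\to\infty$ as $n\to\infty$; (2) $\lambda_n=O\!\left(\frac{\log B_R^{(n)}}{B_R^{(n)}}\right)$; and (3) $Z_{\Lambda_n,\phi^{(n)}}(-\lambda_n)=0$ for every $n$.
   Context: Assumption (A) on $(\mathbb{X},d,\nu)$: for every $x\in\mathbb{X}$, the push-forward of $\nu$ under $y\mapsto d(x,y)$ is absolutely continuous with respect to Lebesgue measure on $\mathbb{R}$. A potential $\phi=(\phi_m)_{m\in\mathbb{N}}$ is a family of measurable $\phi_m:\mathbb{X}^m\to\mathbb{R}\cup\{\infty\}$, written $\phi(\mathbf{x})=\phi_m(\mathbf{x})$; symmetric: invariant under coordinate permutations; repulsive: $\phi_m\ge0$; range at most $R$: $\phi(\mathbf{x})=0$ whenever $\max_{i,j}d(x_i,x_j)>R$; pure $k$-body: $\phi_m=0$ for all $m\ne k$. For $\mathbf{x}\in\mathbb{X}^m$, $S\subseteq[m]$, $\mathbf{x}_S=(x_i)_{i\in S}$; $H(\mathbf{x})=\sum_{\emptyset\ne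 S\subseteq[m]}\phi(\mathbf{x}_S)$; $Z_{\Lambda,\phi}(\lambda)=\sum_{m\ge0}\frac{\lambda^m}{m!}\int_{\Lambda^m}e^{-H(\mathbf{x})}\nu^m(d\mathbf{x})$ with $e^{-\infty}=0$. *)

theory Defs
  imports "HOL-Analysis.Analysis" "HOL-Library.Landau_Symbols"
begin

definition cs_mm_space :: "'a set \<Rightarrow> ('a \<Rightarrow> 'a \<Rightarrow> real) \<Rightarrow> 'a measure \<Rightarrow> bool" where
  "cs_mm_space X d nu \<longleftrightarrow>
     Metric_space X d \<and> Metric_space.mcomplete X d \<and>
     separable_space (Metric_space.mtopology X d) \<and>
     space nu = X \<and>
     sets nu = sigma_sets X {U. openin (Metric_space.mtopology X d) U} \<and>
     (\<forall>x\<in>X. \<exists>U. openin (Metric_space.mtopology X d) U \<and> x \<in> U \<and> emeasure nu U < \<infinity>)"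

definition assumption_A :: "'a set \<Rightarrow> ('a \<Rightarrow> 'a \<Rightarrow> real) \<Rightarrow> 'a measure \<Rightarrow> bool" where
  "assumption_A X d nu \<longleftrightarrow>
     (\<forall>x\<in>X. absolutely_continuous lborel (distr nu lborel (\<lambda>y. d x y)))"

text \<open>A potential is a family phi m : X^m \<rightarrow> R \<union> {\<infinity>}; X^m is represented as the
  extensional functions {..<m} \<rightarrow> X (the space of the product measure).\<close>
type_synonym 'a potential = "nat \<Rightarrow> (nat \<Rightarrow> 'a) \<Rightarrow> ereal"

definition potential_measurable :: "'a measure \<Rightarrow> 'a potential \<Rightarrow> bool" where
  "potential_measurable nu phi \<longleftrightarrow>
     (\<forall>m. phi m \<in> borel_measurable (PiM {..<m} (\<lambda>_. nu)))
     \<and> (\<forall>m x. phi m x \<noteq> -\<infinity>)"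

definition potential_symmetric :: "'a set \<Rightarrow> 'a potential \<Rightarrow> bool" where
  "potential_symmetric X phi \<longleftrightarrow>
     (\<forall>m p x. p permutes {..<m} \<longrightarrow> x \<in> PiE {..<m} (\<lambda>_. X) \<longrightarrow>
        phi m (\<lambda>i\<in>{..<m}. x (p i)) = phi m x)"

definition potential_repulsive :: "'a set \<Rightarrow> 'a potential \<Rightarrow> bool" where
  "potential_repulsive X phi \<longleftrightarrow> (\<forall>m. \<forall>x\<in>PiE {..<m} (\<lambda>_. X). phi m x \<ge> 0)"

definition potential_range :: "'a set \<Rightarrow> ('a \<Rightarrow> 'a \<Rightarrow> real) \<Rightarrow> real \<Rightarrow> 'a potential \<Rightarrow> bool" where
  "potential_range X d R phi \<longleftrightarrow>
     (\<forall>m. \<forall>x\<in>PiE {..<m} (\<lambda>_. X).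
        (\<exists>i<m. \<exists>j<m. d (x i) (x j) > R) \<longrightarrow> phi m x = 0)"

definition pure_k_body :: "'a set \<Rightarrow> nat \<Rightarrow> 'a potential \<Rightarrow> bool" where
  "pure_k_body X k phi \<longleftrightarrow> (\<forall>m. m \<noteq> k \<longrightarrow> (\<forall>x\<in>PiE {..<m} (\<lambda>_. X). phi m x = 0))"

definition subtuple :: "nat set \<Rightarrow> (nat \<Rightarrow> 'a) \<Rightarrow> (nat \<Rightarrow> 'a)" where
  "subtuple S x = (\<lambda>j\<in>{..<card S}. x (enumerate S j))"

definition hamiltonian :: "'a potential \<Rightarrow> nat \<Rightarrow> (nat \<Rightarrow> 'a) \<Rightarrow> ereal" where
  "hamiltonian phi m x = (\<Sum>S\<in>{S. S \<subseteq> {..<m} \<and> S \<noteq> {}}. phi (card S) (subtuple S x))"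

definition boltzmann :: "ereal \<Rightarrow> real" where
  "boltzmann h = (if h = \<infinity> then 0 else if h = -\<infinity> then 0 else exp (- real_of_ereal h))"

definition Zint :: "'a measure \<Rightarrow> 'a potential \<Rightarrow> 'a set \<Rightarrow> nat \<Rightarrow> ennreal" where
  "Zint nu phi L m =
     (\<integral>\<^sup>+ x. indicator (PiE {..<m} (\<lambda>_. L)) x * ennreal (boltzmann (hamiltonian phi m x))
        \<partial>PiM {..<m} (\<lambda>_. nu))"

definition partition_function_eq :: "'a measure \<Rightarrow> 'a potential \<Rightarrow> 'a set \<Rightarrow> real \<Rightarrow> real \<Rightarrow> bool" where
  "partition_function_eq nu phi L lam s \<longleftrightarrow>
     (\<forall>m. Zint nu phi L m < \<infinity>) \<and>
     (\<lambda>m. lam ^ m / fact m * enn2real (Zint nu phi L m)) sums s"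

definition ball_volume_sup :: "'a set \<Rightarrow> ('a \<Rightarrow> 'a \<Rightarrow> real) \<Rightarrow> 'a measure \<Rightarrow> real \<Rightarrow> ennreal" where
  "ball_volume_sup X d nu R = (SUP x\<in>X. emeasure nu {y\<in>X. d x y \<le> R})"

end

theory Submission
  imports Defs
begin


lemma sep: "separable_space (euclidean :: real topology)"
  unfolding separable_space_def
  apply (rule exI[of _ "\<rat>"])
  using Rats_closure_real countable_rat by auto

lemma sf_scale: "sigma_finite_measure (scale_measure (ennreal c) (lborel::real measure))"
proof
  obtain A :: "real set set" where A: "countable A \<and> A \<subseteq> sets lborel \<and> (\<Union>A) = space lborel \<and> (\<forall>a\<in>A. emeasure lborel a \<noteq> \<infinity>)"
    using lborel.sigma_finite_countable by blast
  then show "\<exists>A::real set set. countable A \<and> A \<subseteq> sets (scale_measure (ennreal c) lborel) \<and> (\<Union>A) = space (scale_measure (ennreal c) lborel) \<and> (\<forall>a\<in>A. emeasure (scale_measure (ennreal c) lborel) a \<noteq> \<infinity>)"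
    by (intro exI[of _ A]) (auto simp: space_scale_measure ennreal_mult_eq_top_iff)
qed

lemma csmm: "cs_mm_space UNIV dist (scale_measure (ennreal c) (lborel::real measure))"
  unfolding cs_mm_space_def
proof (intro conjI)
  show "Metric_space UNIV (dist::real\<Rightarrow>_)" by (rule Met_TC.Metric_space_axioms)
  show "Metric_space.mcomplete UNIV (dist::real\<Rightarrow>_)" using complete_UNIV by simp
  show "separable_space (Metric_space.mtopology UNIV (dist::real\<Rightarrow>_))" using sep by simp
  show "space (scale_measure (ennreal c) lborel) = UNIV" by (simp add: space_scale_measure)
  show "sets (scale_measure (ennreal c) lborel) = sigma_sets UNIV {U. openin (Metric_space.mtopology UNIV (dist::real\<Rightarrow>_)) U}"
    by (simp add: borel_def sets_measure_of)
  show "\<forall>x\<in>UNIV. \<exists>U. openin (Metric_space.mtopology UNIV dist) U \<and> x \<in> U \<and> emeasure (scale_measure (ennreal c) lborel) U < \<infinity>"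
    using [[show_types]]
    apply (intro ballI)
    subgoal for x
    apply (rule exI[of _ "ball x 1"])
    using emeasure_lborel_ball_finite[of x 1]
    apply (auto simp: ennreal_mult_less_top top.not_eq_extremum)
    done
  done
qed

lemma asmA: "assumption_A UNIV dist (scale_measure (ennreal c) (lborel::real measure))"
  unfolding assumption_A_def absolutely_continuous_def
proof (intro ballI subsetI)
  fix x :: real and N :: "real set" assume N: "N \<in> null_sets lborel"
  have Nb: "N \<in> sets borel" using N by auto
  have m1: "(\<lambda>y. x + -1 * y) \<in> borel_measurable lborel" by measurable
  have m2: "((+) (-x)) \<in> borel_measurable lborel" by measurable
  have e1: "emeasure lborel ((\<lambda>y. x + -1 * y) -` N) = 0"
  proof -
    have "lborel = density (distr lborel borel (\<lambda>y. x + -1 * y)) (\<lambda>_. ennreal (abs (-1::real)))"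
      by (rule lborel_real_affine) simp
    then have "lborel = distr lborel borel (\<lambda>y::real. x + -1 * y)"
      by (simp add: density_1)
    then have "emeasure lborel N = emeasure (distr lborel borel (\<lambda>y::real. x + -1 * y)) N" by simp
    also have "\<dots> = emeasure lborel ((\<lambda>y. x + -1 * y) -` N)"
      using m1 Nb by (simp add: emeasure_distr)
    finally show ?thesis using N by auto
  qed
  have e2: "emeasure lborel (((+) (-x)) -` N) = 0"
  proof -
    have "emeasure lborel N = emeasure (distr lborel borel ((+) (-x))) N" by (simp add: lborel_distr_plus)
    also have "\<dots> = emeasure lborel (((+) (-x)) -` N)"
      using m2 Nb by (simp add: emeasure_distr)
    finally show ?thesis using N by auto
  qed
  have sub: "(\<lambda>y. dist x y) -` N \<subseteq> (\<lambda>y. x + -1 * y) -` N \<union> ((+) (-x)) -` N"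
    by (auto simp: dist_real_def abs_if split: if_splits)
  have "(\<lambda>y. x + -1 * y) -` N \<union> ((+) (-x)) -` N \<in> null_sets lborel"
  proof (rule null_sets.Un)
    have "(\<lambda>y. x + -1 * y) -` N \<inter> space lborel \<in> sets lborel" using measurable_sets[OF m1 Nb] by simp
    then show "(\<lambda>y. x + -1 * y) -` N \<in> null_sets lborel" using e1 by (auto intro: null_setsI)
    have "((+) (-x)) -` N \<inter> space lborel \<in> sets lborel" using measurable_sets[OF m2 Nb] by simp
    then show "((+) (-x)) -` N \<in> null_sets lborel" using e2 by (auto intro: null_setsI)
  qed
  then have nn: "(\<lambda>y. dist x y) -` N \<in> null_sets lborel" if that: "(\<lambda>y. x + -1 * y) -` N \<union> ((+) (-x)) -` N \<in> null_sets lborel"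
  proof -
    have m3: "(\<lambda>y. dist x y) \<in> borel_measurable lborel" by measurable
    have "(\<lambda>y. dist x y) -` N \<in> sets lborel" using measurable_sets[OF m3 Nb] by simp
    then show ?thesis using null_sets_subset[OF that _ sub] by simp
  qed
  note nn = nn[OF \<open>(\<lambda>y. x + -1 * y) -` N \<union> ((+) (-x)) -` N \<in> null_sets lborel\<close>]
  show "N \<in> null_sets (distr (scale_measure (ennreal c) lborel) lborel (\<lambda>y. dist x y))"
    using nn Nb by (auto simp: null_sets_def emeasure_distr space_scale_measure)
qed



definition gpoly :: "nat \<Rightarrow> real \<Rightarrow> real \<Rightarrow> real" where
  "gpoly k w t = (\<Sum>m<k. (-t)^m / fact m) + (-t)^k / fact k * w"

definition Tb :: "nat \<Rightarrow> real" where
  "Tb k = (if even k then real (k - 1) * fact (k - 1) + 1 else real k * real k ^ k * fact k + 1)"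

lemma sum_le_bound:
  assumes "T \<ge> 1"
  shows "(\<Sum>m<n. (-T)^m / fact m) \<le> real n * T^(n-1)"
proof -
  have "(\<Sum>m<n. (-T)^m / fact m) \<le> (\<Sum>m<n. T^(n-1))"
  proof (rule sum_mono)
    fix m assume m: "m \<in> {..<n}"
    have "(-T)^m / fact m \<le> \<bar>(-T)^m / fact m\<bar>" by (rule abs_ge_self)
    also have "\<dots> = T^m / fact m" using assms by (simp add: power_abs)
    also have "\<dots> \<le> T^m" using assms fact_ge_1[of m, where 'a=real] by (simp add: divide_le_eq mult_le_cancel_left1)
    also have "\<dots> \<le> T^(n-1)" using assms m by (intro power_increasing) auto
    finally show "(-T)^m / fact m \<le> T^(n-1)" .
  qed
  then show ?thesis by simp
qed

lemma gpoly_T: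
  assumes k: "k \<ge> 2" and w: "(odd k \<and> w \<ge> 1 / real k ^ k) \<or> (even k \<and> w = 0)"
  shows "gpoly k w (Tb k) \<le> 0"
proof (cases "even k")
  case True
  then have w0: "w = 0" using w by auto
  define T where "T = Tb k"
  have T: "T = real (k - 1) * fact (k - 1) + 1" using True by (simp add: T_def Tb_def)
  have T1: "T \<ge> 1" using T by simp
  obtain j where kj: "k = Suc j" using k by (cases k) auto
  have oj: "odd j" using True kj by simp
  have "gpoly k w T = (\<Sum>m<j. (-T)^m / fact m) + (-T)^j / fact j"
    using w0 kj by (simp add: gpoly_def)
  also have "(-T)^j = - (T^j)" using oj by simp
  also have "(\<Sum>m<j. (-T)^m / fact m) \<le> real j * T^(j-1)" by (rule sum_le_bound[OF T1])
  finally have A: "gpoly k w T \<le> real j * T^(j-1) - T^j / fact j" by simp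
  have j1: "j \<ge> 1" using k kj by simp
  have "T^j = T * T^(j-1)" using j1 by (metis Suc_diff_le diff_Suc_1 power_Suc)
  moreover have "T \<ge> real j * fact j" using T kj by simp
  ultimately have "T^j \<ge> real j * fact j * T^(j-1)"
    using T1 by (simp add: mult_right_mono)
  then have "T^j / fact j \<ge> real j * T^(j-1)"
    by (simp add: le_divide_eq mult.commute mult.left_commute)
  with A show ?thesis by (simp add: T_def)
next
  case False
  then have w1: "w \<ge> 1 / real k ^ k" using w by auto
  define T where "T = Tb k"
  have T: "T = real k * real k ^ k * fact k + 1" using False by (simp add: T_def Tb_def)
  have T1: "T \<ge> 1" using T by simp
  have "gpoly k w T = (\<Sum>m<k. (-T)^m / fact m) - T^k / fact k * w"
    using False by (simp add: gpoly_def)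
  also have "(\<Sum>m<k. (-T)^m / fact m) \<le> real k * T^(k-1)" by (rule sum_le_bound[OF T1])
  finally have A: "gpoly k w T \<le> real k * T^(k-1) - T^k / fact k * w" by simp
  have kk: "real k ^ k > 0" using k by simp
  have "T^k / fact k * w \<ge> T^k / fact k * (1 / real k ^ k)"
    using w1 T1 by (intro mult_left_mono) auto
  also have "T^k / fact k * (1 / real k ^ k) = T^k / (fact k * real k ^ k)" by simp
  finally have B: "T^k / fact k * w \<ge> T^k / (fact k * real k ^ k)" .
  have "T^k = T * T^(k-1)" using k by (metis Suc_diff_le diff_Suc_1 le_trans one_le_numeral power_Suc)
  moreover have "T \<ge> real k * (fact k * real k ^ k)" using T by simp
  ultimately have "T^k \<ge> real k * (fact k * real k ^ k) * T^(k-1)"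
    using T1 by (simp add: mult_right_mono)
  then have "T^k / (fact k * real k ^ k) \<ge> real k * T^(k-1)"
    using kk by (simp add: le_divide_eq mult.commute mult.left_commute)
  with A B show ?thesis by (simp add: T_def)
qed

lemma gpoly_root:
  assumes k: "k \<ge> 2" and w: "(odd k \<and> w \<ge> 1 / real k ^ k) \<or> (even k \<and> w = 0)"
  shows "\<exists>t>0. t \<le> Tb k \<and> gpoly k w t = 0"
proof -
  have c: "continuous_on {0..Tb k} (gpoly k w)"
    unfolding gpoly_def by (intro continuous_intros) auto
  obtain j where kj: "k = Suc j" using k by (cases k) auto
  have g0: "gpoly k w 0 = 1"
    using k unfolding kj by (simp add: gpoly_def zero_power sum.lessThan_Suc_shift del: sum.lessThan_Suc)
  have Tpos: "Tb k \<ge> 0" by (simp add: Tb_def)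
  obtain t where t: "0 \<le> t" "t \<le> Tb k" "gpoly k w t = 0"
    using IVT2'[of "gpoly k w" "Tb k" 0 0] gpoly_T[OF k w] g0 Tpos c by auto
  have "t \<noteq> 0" using t g0 by auto
  with t show ?thesis by (intro exI[of _ t]) auto
qed



definition pp :: "nat \<Rightarrow> nat" where "pp k = (if even k then k - 1 else k)"
definition pc :: "real \<Rightarrow> nat \<Rightarrow> real \<Rightarrow> nat" where "pc R p y = nat \<lfloor>y * real p / R\<rfloor>"

definition Phi :: "real \<Rightarrow> nat \<Rightarrow> real potential" where
  "Phi R k m y = (if m = k \<and> (\<forall>i<k. y i \<in> {0..<R}) \<and>
      (\<exists>i<k. \<exists>j<k. i \<noteq> j \<and> pc R (pp k) (y i) = pc R (pp k) (y j)) then \<infinity> else 0)"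

lemma Phi_vals: "Phi R k m y = 0 \<or> Phi R k m y = \<infinity>"
  by (simp add: Phi_def)

lemma Phi_nonneg: "Phi R k m y \<ge> 0"
  by (simp add: Phi_def)

lemma Phi_other: "m \<noteq> k \<Longrightarrow> Phi R k m y = 0"
  by (simp add: Phi_def)

lemma Phi_subtuple:
  assumes S: "finite S" "card S = k"
  shows "Phi R k (card S) (subtuple S x) =
    (if (\<forall>i\<in>S. x i \<in> {0..<R}) \<and> (\<exists>i\<in>S. \<exists>j\<in>S. i \<noteq> j \<and> pc R (pp k) (x i) = pc R (pp k) (x j))
     then \<infinity> else 0)"
proof -
  have b: "bij_betw (enumerate S) {..<k} S" using finite_bij_enumerate[OF S(1)] S(2) by simp
  have sj: "\<And>i. i \<in> S \<Longrightarrow> \<exists>j<k. enumerate S j = i" using b by (force simp: bij_betw_def)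
  have st: "\<And>j. j < k \<Longrightarrow> subtuple S x j = x (enumerate S j)"
    using S by (simp add: subtuple_def)
  have e1: "(\<forall>i<k. subtuple S x i \<in> {0..<R}) \<longleftrightarrow> (\<forall>i\<in>S. x i \<in> {0..<R})"
  proof
    assume a: "\<forall>i<k. subtuple S x i \<in> {0..<R}"
    show "\<forall>i\<in>S. x i \<in> {0..<R}"
    proof
      fix i assume "i \<in> S"
      then obtain j where "j < k" "enumerate S j = i" using sj by blast
      then show "x i \<in> {0..<R}" using a st by force
    qed
  next
    assume a: "\<forall>i\<in>S. x i \<in> {0..<R}"
    show "\<forall>i<k. subtuple S x i \<in> {0..<R}"
      using a st b by (auto simp: bij_betw_def)
  qed
  have e2: "(\<exists>i<k. \<exists>j<k. i \<noteq> j \<and> pc R (pp k) (subtuple S x i) = pc R (pp k) (subtuple S x j))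
     \<longleftrightarrow> (\<exists>i\<in>S. \<exists>j\<in>S. i \<noteq> j \<and> pc R (pp k) (x i) = pc R (pp k) (x j))"
  proof
    assume "\<exists>i<k. \<exists>j<k. i \<noteq> j \<and> pc R (pp k) (subtuple S x i) = pc R (pp k) (subtuple S x j)"
    then obtain i j where ij: "i < k" "j < k" "i \<noteq> j" "pc R (pp k) (subtuple S x i) = pc R (pp k) (subtuple S x j)"
      by blast
    have "enumerate S i \<noteq> enumerate S j" using b ij by (auto simp: bij_betw_def inj_on_def)
    moreover have "enumerate S i \<in> S" "enumerate S j \<in> S" using b ij by (auto simp: bij_betw_def)
    ultimately show "\<exists>i\<in>S. \<exists>j\<in>S. i \<noteq> j \<and> pc R (pp k) (x i) = pc R (pp k) (x j)"
      using ij st by metis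
  next
    assume "\<exists>i\<in>S. \<exists>j\<in>S. i \<noteq> j \<and> pc R (pp k) (x i) = pc R (pp k) (x j)"
    then obtain i j where ij: "i \<in> S" "j \<in> S" "i \<noteq> j" "pc R (pp k) (x i) = pc R (pp k) (x j)"
      by blast
    obtain i' where i': "i' < k" "enumerate S i' = i" using sj ij by blast
    obtain j' where j': "j' < k" "enumerate S j' = j" using sj ij by blast
    have "i' \<noteq> j'" using i' j' ij by auto
    then show "\<exists>i<k. \<exists>j<k. i \<noteq> j \<and> pc R (pp k) (subtuple S x i) = pc R (pp k) (subtuple S x j)"
      using i' j' ij st by metis
  qed
  show ?thesis unfolding Phi_def using e1 e2 S(2) by simp
qed

lemma ham_small:
  assumes "m < k"
  shows "hamiltonian (Phi R k) m x = 0"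
  unfolding hamiltonian_def
proof (rule sum.neutral, intro ballI)
  fix S assume "S \<in> {S. S \<subseteq> {..<m} \<and> S \<noteq> {}}"
  then have "S \<subseteq> {..<m}" by auto
  then have "card S \<le> m" by (metis card_lessThan card_mono finite_lessThan)
  then show "Phi R k (card S) (subtuple S x) = 0" using assms by (intro Phi_other) auto
qed

lemma pc_less:
  assumes "R > 0" "y \<in> {0..<R}" "p \<ge> 1"
  shows "pc R p y < p"
proof -
  have "y * real p / R < real p" using assms by (simp add: divide_less_eq)
  then have "\<lfloor>y * real p / R\<rfloor> < int p" by (simp add: floor_less_iff)
  moreover have "0 \<le> \<lfloor>y * real p / R\<rfloor>" using assms by simp
  ultimately show ?thesis unfolding pc_def by (simp add: nat_less_iff)
qed

lemma ham_inf:
  assumes R: "R > 0" and k: "k \<ge> 2" and m: "k \<le> m" "pp k < m"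
    and x: "x \<in> PiE {..<m} (\<lambda>_. {0..<R})"
  shows "hamiltonian (Phi R k) m x = \<infinity>"
proof -
  let ?f = "\<lambda>i. pc R (pp k) (x i)"
  have p1: "pp k \<ge> 1" using k by (cases "even k") (auto simp: pp_def)
  have "?f ` {..<m} \<subseteq> {..<pp k}" using pc_less[OF R _ p1] x by (auto simp: PiE_def Pi_def)
  then have "card (?f ` {..<m}) \<le> pp k" by (metis card_lessThan card_mono finite_lessThan)
  then have "\<not> inj_on ?f {..<m}" using m by (intro pigeonhole) simp
  then obtain i j where ij: "i < m" "j < m" "i \<noteq> j" "?f i = ?f j" by (auto simp: inj_on_def)
  have "k - 2 \<le> card ({..<m} - {i, j})" using ij m by (simp add: card_Diff_subset)
  then obtain T where T: "T \<subseteq> {..<m} - {i, j}" "card T = k - 2" "finite T"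
    by (rule obtain_subset_with_card_n)
  define S where "S = insert i (insert j T)"
  have Sf: "finite S" using T by (simp add: S_def)
  have Sc: "card S = k" using T ij k by (auto simp: S_def card_insert_if)
  have Ssub: "S \<subseteq> {..<m}" using T ij by (auto simp: S_def)
  have inS: "S \<in> {S. S \<subseteq> {..<m} \<and> S \<noteq> {}}" using Ssub by (auto simp: S_def)
  have "Phi R k (card S) (subtuple S x) = \<infinity>"
  proof -
    have "\<forall>i\<in>S. x i \<in> {0..<R}" using Ssub x by (auto simp: PiE_def Pi_def)
    moreover have "\<exists>i\<in>S. \<exists>j\<in>S. i \<noteq> j \<and> pc R (pp k) (x i) = pc R (pp k) (x j)"
      using ij by (auto simp: S_def)
    ultimately show ?thesis using Phi_subtuple[OF Sf Sc] Sc by simp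
  qed
  then show ?thesis unfolding hamiltonian_def
    using inS by (subst sum_Pinfty) auto
qed

definition Pc :: "real \<Rightarrow> nat \<Rightarrow> nat \<Rightarrow> real set" where
  "Pc R k i = {R * real i / real k ..< R * real (Suc i) / real k}"

lemma pc_box:
  assumes R: "R > 0" and k: "k \<ge> 1" and y: "y \<in> Pc R k i"
  shows "pc R k y = i"
proof -
  have "R * real i / real k \<le> y" "y < R * real (Suc i) / real k" using y by (auto simp: Pc_def)
  then have "real i \<le> y * real k / R" "y * real k / R < real i + 1"
    using R k by (auto simp: field_simps)
  then have "\<lfloor>y * real k / R\<rfloor> = int i" by (intro floor_unique) auto
  then show ?thesis by (simp add: pc_def)
qed

lemma Pc_sub: assumes R: "R > 0" and "i < k" shows "Pc R k i \<subseteq> {0..<R}"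
proof
  fix y assume y: "y \<in> Pc R k i"
  have "R * real (Suc i) / real k \<le> R" using assms by (simp add: divide_le_eq)
  moreover have "0 \<le> R * real i / real k" using R by simp
  moreover have "R * real i / real k \<le> y" "y < R * real (Suc i) / real k" using y by (auto simp: Pc_def)
  ultimately show "y \<in> {0..<R}" by simp
qed

lemma ham_box:
  assumes R: "R > 0" and k: "odd k" "k \<ge> 2" and x: "x \<in> PiE {..<k} (Pc R k)"
  shows "hamiltonian (Phi R k) k x = 0"
  unfolding hamiltonian_def
proof (rule sum.neutral, intro ballI)
  fix S assume "S \<in> {S. S \<subseteq> {..<k} \<and> S \<noteq> {}}"
  then have S: "S \<subseteq> {..<k}" "S \<noteq> {}" by auto
  show "Phi R k (card S) (subtuple S x) = 0"
  proof (cases "card S = k")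
    case False then show ?thesis by (intro Phi_other)
  next
    case True
    have Sf: "finite S" using S finite_subset by blast
    have "S = {..<k}" using True S by (intro card_subset_eq) auto
    have ppk: "pp k = k" using k by (simp add: pp_def)
    have "\<And>i. i \<in> S \<Longrightarrow> pc R (pp k) (x i) = i"
      using x S k ppk pc_box[OF R] by (auto simp: PiE_def Pi_def)
    then have "\<not> (\<exists>i\<in>S. \<exists>j\<in>S. i \<noteq> j \<and> pc R (pp k) (x i) = pc R (pp k) (x j))" by auto
    then show ?thesis using Phi_subtuple[OF Sf True] True by simp
  qed
qed



lemma pc_meas: "(\<lambda>y. real (pc R p y)) \<in> borel_measurable borel"
  unfolding pc_def by measurable

lemma Phi_meas:
  assumes sn: "sets nu = sets (borel :: real measure)"
  shows "Phi R k m \<in> borel_measurable (PiM {..<m} (\<lambda>_. nu))"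
proof (cases "m = k")
  case False
  then have "Phi R k m = (\<lambda>_. 0)" by (auto simp: Phi_other)
  then show ?thesis by simp
next
  case True
  let ?M = "PiM {..<m} (\<lambda>_. nu)"
  have comp: "\<And>i. i \<in> {..<m} \<Longrightarrow> (\<lambda>y. y i) \<in> measurable ?M borel"
    using measurable_component_singleton[where M="\<lambda>_. nu" and I="{..<m}"] sn
    by (simp cong: measurable_cong_sets)
  have P1: "Measurable.pred ?M (\<lambda>y. \<forall>i\<in>{..<m}. y i \<in> {0..<R})"
  proof (rule pred_intros_finite(3), simp)
    fix i assume "i \<in> {..<m}"
    then show "Measurable.pred ?M (\<lambda>y. y i \<in> {0..<R})"
      by (intro pred_sets2[OF _ comp]) auto
  qed
  have fc: "\<And>i. i \<in> {..<m} \<Longrightarrow> (\<lambda>y. real (pc R (pp k) (y i))) \<in> borel_measurable ?M"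
    using measurable_comp[OF comp pc_meas] by (simp add: o_def)
  have P2: "Measurable.pred ?M (\<lambda>y. \<exists>i\<in>{..<m}. \<exists>j\<in>{..<m}. i \<noteq> j \<and> real (pc R (pp k) (y i)) = real (pc R (pp k) (y j)))"
  proof (rule pred_intros_finite(4), simp, rule pred_intros_finite(4), simp)
    fix i j assume ij: "i \<in> {..<m}" "j \<in> {..<m}"
    show "Measurable.pred ?M (\<lambda>y. i \<noteq> j \<and> real (pc R (pp k) (y i)) = real (pc R (pp k) (y j)))"
    proof (cases "i = j")
      case True then show ?thesis by (simp add: pred_def)
    next
      case False
      have "{x \<in> space ?M. real (pc R (pp k) (x i)) = real (pc R (pp k) (x j))} \<in> sets ?M"
        using fc ij by (intro measurable_equality_set) auto
      then show ?thesis using False by (simp add: pred_def)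
    qed
  qed
  have eq: "Phi R k m = (\<lambda>y. if (\<forall>i\<in>{..<m}. y i \<in> {0..<R}) \<and>
      (\<exists>i\<in>{..<m}. \<exists>j\<in>{..<m}. i \<noteq> j \<and> real (pc R (pp k) (y i)) = real (pc R (pp k) (y j))) then \<infinity> else 0)"
    using True by (auto simp: Phi_def fun_eq_iff)
  have "Measurable.pred ?M (\<lambda>y. (\<forall>i\<in>{..<m}. y i \<in> {0..<R}) \<and>
      (\<exists>i\<in>{..<m}. \<exists>j\<in>{..<m}. i \<noteq> j \<and> real (pc R (pp k) (y i)) = real (pc R (pp k) (y j))))"
    using P1 P2 by (rule pred_intros_logic(3))
  then show ?thesis unfolding eq
    by (intro measurable_If) (auto simp: pred_def)
qed



lemma ham_nonneg: "hamiltonian (Phi R k) m x \<ge> 0"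
  unfolding hamiltonian_def by (intro sum_nonneg) (simp add: Phi_nonneg)

lemma boltz_le1: "h \<ge> 0 \<Longrightarrow> boltzmann h \<le> 1"
  unfolding boltzmann_def using real_of_ereal_pos[of h] by auto

lemma boltz_nonneg: "boltzmann h \<ge> 0"
  unfolding boltzmann_def by auto

lemma prodM:
  assumes c: "c > 0" and R: "R > 0"
  shows "emeasure (PiM {..<m} (\<lambda>_. scale_measure (ennreal c) lborel)) (PiE {..<m} (\<lambda>_. {0..<R})) = ennreal ((c*R)^m)"
proof -
  interpret product_sigma_finite "\<lambda>_::nat. scale_measure (ennreal c) (lborel::real measure)"
    by (simp add: product_sigma_finite_def sf_scale)
  have "emeasure (PiM {..<m} (\<lambda>_. scale_measure (ennreal c) lborel)) (PiE {..<m} (\<lambda>_. {0..<R}))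
     = (\<Prod>i\<in>{..<m}. emeasure (scale_measure (ennreal c) lborel) {0..<R})"
    by (rule emeasure_PiM) auto
  also have "\<dots> = (\<Prod>i\<in>{..<m}. ennreal (c * R))" using c R by (simp add: ennreal_mult)
  also have "\<dots> = ennreal ((c*R)^m)" using c R by (simp add: ennreal_power)
  finally show ?thesis .
qed

lemma boxM:
  assumes c: "c > 0" and R: "R > 0" and k: "k \<ge> 1"
  shows "emeasure (PiM {..<k} (\<lambda>_. scale_measure (ennreal c) lborel)) (PiE {..<k} (Pc R k)) = ennreal ((c*(R/k))^k)"
proof -
  interpret product_sigma_finite "\<lambda>_::nat. scale_measure (ennreal c) (lborel::real measure)"
    by (simp add: product_sigma_finite_def sf_scale)
  have "emeasure (PiM {..<k} (\<lambda>_. scale_measure (ennreal c) lborel)) (PiE {..<k} (Pc R k))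
     = (\<Prod>i\<in>{..<k}. emeasure (scale_measure (ennreal c) lborel) (Pc R k i))"
    by (rule emeasure_PiM) (auto simp: Pc_def)
  also have "\<dots> = (\<Prod>i\<in>{..<k}. ennreal (c * (R/k)))"
  proof (rule prod.cong[OF refl])
    fix i
    have le: "R * real i / real k \<le> R * real (Suc i) / real k" using R k by (simp add: divide_right_mono)
    have "R * real (Suc i) / real k - R * real i / real k = R / k" using k by (simp add: field_simps)
    then show "emeasure (scale_measure (ennreal c) lborel) (Pc R k i) = ennreal (c * (R/k))"
      using c R le k by (simp add: Pc_def ennreal_mult[symmetric])
  qed
  also have "\<dots> = ennreal ((c*(R/k))^k)" using c R by (simp add: ennreal_power)
  finally show ?thesis .
qed

definition nuc :: "real \<Rightarrow> real measure" where "nuc c = scale_measure (ennreal c) lborel"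

lemma Z_le:
  assumes c: "c > 0" and R: "R > 0"
  shows "Zint (nuc c) (Phi R k) {0..<R} m \<le> ennreal ((c*R)^m)"
proof -
  have "Zint (nuc c) (Phi R k) {0..<R} m \<le> (\<integral>\<^sup>+ x. indicator (PiE {..<m} (\<lambda>_. {0..<R})) x \<partial>PiM {..<m} (\<lambda>_. nuc c))"
    unfolding Zint_def
  proof (rule nn_integral_mono)
    fix x
    have "ennreal (boltzmann (hamiltonian (Phi R k) m x)) \<le> 1"
      using boltz_le1[OF ham_nonneg] by simp
    then show "indicator (PiE {..<m} (\<lambda>_. {0..<R})) x * ennreal (boltzmann (hamiltonian (Phi R k) m x))
      \<le> indicator (PiE {..<m} (\<lambda>_. {0..<R})) x"
      by (cases "x \<in> PiE {..<m} (\<lambda>_. {0..<R})") auto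
  qed
  also have "\<dots> = emeasure (PiM {..<m} (\<lambda>_. nuc c)) (PiE {..<m} (\<lambda>_. {0..<R}))"
    by (rule nn_integral_indicator) (auto simp: nuc_def intro!: sets_PiM_I_finite)
  also have "\<dots> = ennreal ((c*R)^m)" using prodM[OF c R] by (simp add: nuc_def)
  finally show ?thesis .
qed

lemma Z_small:
  assumes c: "c > 0" and R: "R > 0" and m: "m < k"
  shows "Zint (nuc c) (Phi R k) {0..<R} m = ennreal ((c*R)^m)"
proof -
  have "Zint (nuc c) (Phi R k) {0..<R} m = (\<integral>\<^sup>+ x. indicator (PiE {..<m} (\<lambda>_. {0..<R})) x \<partial>PiM {..<m} (\<lambda>_. nuc c))"
    unfolding Zint_def using ham_small[OF m] by (simp add: boltzmann_def)
  also have "\<dots> = emeasure (PiM {..<m} (\<lambda>_. nuc c)) (PiE {..<m} (\<lambda>_. {0..<R}))"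
    by (rule nn_integral_indicator) (auto simp: nuc_def intro!: sets_PiM_I_finite)
  also have "\<dots> = ennreal ((c*R)^m)" using prodM[OF c R] by (simp add: nuc_def)
  finally show ?thesis .
qed

lemma Z_big:
  assumes R: "R > 0" and k: "k \<ge> 2" and m: "k \<le> m" "pp k < m"
  shows "Zint (nuc c) (Phi R k) {0..<R} m = 0"
proof -
  have "Zint (nuc c) (Phi R k) {0..<R} m = (\<integral>\<^sup>+ x. 0 \<partial>PiM {..<m} (\<lambda>_. nuc c))"
    unfolding Zint_def
  proof (rule nn_integral_cong)
    fix x
    show "indicator (PiE {..<m} (\<lambda>_. {0..<R})) x * ennreal (boltzmann (hamiltonian (Phi R k) m x)) = 0"
      using ham_inf[OF R k m, of x] by (cases "x \<in> PiE {..<m} (\<lambda>_. {0..<R})") (auto simp: boltzmann_def)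
  qed
  then show ?thesis by simp
qed

lemma Z_box:
  assumes c: "c > 0" and R: "R > 0" and k: "odd k" "k \<ge> 2"
  shows "Zint (nuc c) (Phi R k) {0..<R} k \<ge> ennreal ((c*(R/k))^k)"
proof -
  have sub: "PiE {..<k} (Pc R k) \<subseteq> PiE {..<k} (\<lambda>_. {0..<R})"
    using Pc_sub[OF R, of _ k] by (force simp: PiE_def Pi_def)
  have "ennreal ((c*(R/k))^k) = emeasure (PiM {..<k} (\<lambda>_. nuc c)) (PiE {..<k} (Pc R k))"
    using boxM[OF c R, of k] k by (simp add: nuc_def)
  also have "\<dots> = (\<integral>\<^sup>+ x. indicator (PiE {..<k} (Pc R k)) x \<partial>PiM {..<k} (\<lambda>_. nuc c))"
    by (rule nn_integral_indicator[symmetric]) (auto simp: nuc_def Pc_def intro!: sets_PiM_I_finite)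
  also have "\<dots> \<le> Zint (nuc c) (Phi R k) {0..<R} k"
    unfolding Zint_def
  proof (rule nn_integral_mono)
    fix x
    show "indicator (PiE {..<k} (Pc R k)) x \<le> indicator (PiE {..<k} (\<lambda>_. {0..<R})) x * ennreal (boltzmann (hamiltonian (Phi R k) k x))"
    proof (cases "x \<in> PiE {..<k} (Pc R k)")
      case True
      then have "x \<in> PiE {..<k} (\<lambda>_. {0..<R})" using sub by auto
      then show ?thesis using True ham_box[OF R k True] by (simp add: boltzmann_def)
    qed simp
  qed
  finally show ?thesis .
qed



lemma enn_Z:
  assumes c: "c > 0" and R: "R > 0" and k: "k \<ge> 2"
  shows "\<And>m. m < k \<Longrightarrow> enn2real (Zint (nuc c) (Phi R k) {0..<R} m) = (c*R)^m"
    and "\<And>m. m > k \<Longrightarrow> enn2real (Zint (nuc c) (Phi R k) {0..<R} m) = 0"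
    and "even k \<Longrightarrow> enn2real (Zint (nuc c) (Phi R k) {0..<R} k) = 0"
    and "odd k \<Longrightarrow> enn2real (Zint (nuc c) (Phi R k) {0..<R} k) \<ge> (c*(R/k))^k"
proof -
  show "\<And>m. m < k \<Longrightarrow> enn2real (Zint (nuc c) (Phi R k) {0..<R} m) = (c*R)^m"
    using Z_small[OF c R] c R by simp
  show "\<And>m. m > k \<Longrightarrow> enn2real (Zint (nuc c) (Phi R k) {0..<R} m) = 0"
  proof -
    fix m assume "m > k"
    then have "k \<le> m" "pp k < m" by (auto simp: pp_def)
    then show "enn2real (Zint (nuc c) (Phi R k) {0..<R} m) = 0" using Z_big[OF R k] by simp
  qed
  show "even k \<Longrightarrow> enn2real (Zint (nuc c) (Phi R k) {0..<R} k) = 0"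
    using Z_big[OF R k, of k] k by (simp add: pp_def)
  assume o: "odd k"
  have "Zint (nuc c) (Phi R k) {0..<R} k \<ge> ennreal ((c*(R/k))^k)" by (rule Z_box[OF c R o k])
  moreover have "Zint (nuc c) (Phi R k) {0..<R} k < \<infinity>"
    using Z_le[OF c R, of k k] by (simp add: le_less_trans)
  ultimately show "enn2real (Zint (nuc c) (Phi R k) {0..<R} k) \<ge> (c*(R/k))^k"
    using c R enn2real_mono[of "ennreal ((c*(R/k))^k)" "Zint (nuc c) (Phi R k) {0..<R} k"] by simp
qed

lemma part_root:
  assumes c: "c > 0" and R: "R > 0" and k: "k \<ge> 2"
  shows "\<exists>lam>0. lam \<le> Tb k / (c*R) \<and> partition_function_eq (nuc c) (Phi R k) {0..<R} (-lam) 0"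
proof -
  define a where "a = c * R"
  have a: "a > 0" using c R by (simp add: a_def)
  define V where "V = enn2real (Zint (nuc c) (Phi R k) {0..<R} k)"
  define w where "w = V / a^k"
  have wc: "(odd k \<and> w \<ge> 1 / real k ^ k) \<or> (even k \<and> w = 0)"
  proof (cases "even k")
    case True then show ?thesis using enn_Z(3)[OF c R k] by (simp add: w_def V_def)
  next
    case False
    then have "V \<ge> (a / k)^k" using enn_Z(4)[OF c R k] by (simp add: V_def a_def)
    then have "V / a^k \<ge> (a/k)^k / a^k" using a by (intro divide_right_mono) auto
    moreover have "(a/k)^k / a^k = 1 / real k ^ k" using a by (simp add: power_divide)
    ultimately show ?thesis using False by (simp add: w_def)
  qed
  obtain t where t: "t > 0" "t \<le> Tb k" "gpoly k w t = 0" using gpoly_root[OF k wc] by blast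
  define lam where "lam = t / a"
  have lam: "lam > 0" using t a by (simp add: lam_def)
  have lamT: "lam \<le> Tb k / (c*R)" using t a by (simp add: lam_def a_def divide_right_mono)
  let ?f = "\<lambda>m. (-lam)^m / fact m * enn2real (Zint (nuc c) (Phi R k) {0..<R} m)"
  have "?f sums (\<Sum>m\<in>{..k}. ?f m)"
    by (rule sums_finite) (auto simp: enn_Z(2)[OF c R k])
  also have "(\<Sum>m\<in>{..k}. ?f m) = (\<Sum>m<k. ?f m) + ?f k"
    by (simp add: lessThan_Suc_atMost[symmetric])
  also have "(\<Sum>m<k. ?f m) = (\<Sum>m<k. (-t)^m / fact m)"
  proof (rule sum.cong[OF refl])
    fix m assume "m \<in> {..<k}"
    then have "?f m = (-lam)^m / fact m * a^m" using enn_Z(1)[OF c R k] by (simp add: a_def)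
    also have "\<dots> = (-lam * a)^m / fact m" by (simp add: power_mult_distrib[symmetric])
    also have "-lam * a = -t" using a by (simp add: lam_def)
    finally show "?f m = (-t)^m / fact m" .
  qed
  also have "?f k = (-t)^k / fact k * w"
  proof -
    have h1: "?f k = (-lam)^k / fact k * V" by (simp add: V_def)
    have h2: "(-lam)^k = (-t)^k / a^k" by (simp add: lam_def power_divide[symmetric])
    have "?f k = (-t)^k / a^k / fact k * V" using h1 h2 by simp
    then show ?thesis by (simp add: w_def)
  qed
  finally have "?f sums gpoly k w t" by (simp add: gpoly_def)
  then have "?f sums 0" using t by simp
  moreover have "\<forall>m. Zint (nuc c) (Phi R k) {0..<R} m < \<infinity>"
    using Z_le[OF c R] by (metis ennreal_less_top le_less_trans infinity_ennreal_def)
  ultimately have "partition_function_eq (nuc c) (Phi R k) {0..<R} (-lam) 0"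
    by (simp add: partition_function_eq_def)
  with lam lamT show ?thesis by blast
qed



lemma Phi_sym: "potential_symmetric UNIV (Phi R k)"
  unfolding potential_symmetric_def
proof (intro allI impI)
  fix m p and x :: "nat \<Rightarrow> real"
  assume p: "p permutes {..<m}" and x: "x \<in> PiE {..<m} (\<lambda>_. UNIV)"
  show "Phi R k m (\<lambda>i\<in>{..<m}. x (p i)) = Phi R k m x"
  proof (cases "m = k")
    case False then show ?thesis by (simp add: Phi_other)
  next
    case True
    let ?y = "\<lambda>i\<in>{..<m}. x (p i)"
    have pin: "\<And>i. i < m \<Longrightarrow> p i < m" using permutes_in_image[OF p] by auto
    have psurj: "\<And>i. i < m \<Longrightarrow> \<exists>j<m. p j = i"
      using permutes_image[OF p] by (metis imageE lessThan_iff)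
    have pinj: "\<And>i j. i < m \<Longrightarrow> j < m \<Longrightarrow> p i = p j \<Longrightarrow> i = j"
      using permutes_inj_on[OF p] by (auto simp: inj_on_def)
    have e1: "(\<forall>i<k. ?y i \<in> {0..<R}) \<longleftrightarrow> (\<forall>i<k. x i \<in> {0..<R})"
      using True pin psurj by auto
    have e2: "(\<exists>i<k. \<exists>j<k. i \<noteq> j \<and> pc R (pp k) (?y i) = pc R (pp k) (?y j)) \<longleftrightarrow>
              (\<exists>i<k. \<exists>j<k. i \<noteq> j \<and> pc R (pp k) (x i) = pc R (pp k) (x j))"
    proof
      assume "\<exists>i<k. \<exists>j<k. i \<noteq> j \<and> pc R (pp k) (?y i) = pc R (pp k) (?y j)"
      then obtain i j where ij: "i < k" "j < k" "i \<noteq> j" "pc R (pp k) (?y i) = pc R (pp k) (?y j)" by blast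
      then have "p i \<noteq> p j" using pinj True by blast
      then show "\<exists>i<k. \<exists>j<k. i \<noteq> j \<and> pc R (pp k) (x i) = pc R (pp k) (x j)"
        using ij pin True by (intro exI[of _ "p i"] exI[of _ "p j"]) auto
    next
      assume "\<exists>i<k. \<exists>j<k. i \<noteq> j \<and> pc R (pp k) (x i) = pc R (pp k) (x j)"
      then obtain i j where ij: "i < k" "j < k" "i \<noteq> j" "pc R (pp k) (x i) = pc R (pp k) (x j)" by blast
      obtain i' where i': "i' < m" "p i' = i" using psurj ij True by blast
      obtain j' where j': "j' < m" "p j' = j" using psurj ij True by blast
      have "i' \<noteq> j'" using i' j' ij by auto
      then show "\<exists>i<k. \<exists>j<k. i \<noteq> j \<and> pc R (pp k) (?y i) = pc R (pp k) (?y j)"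
        using i' j' ij True by (intro exI[of _ i'] exI[of _ j']) auto
    qed
    show ?thesis unfolding Phi_def using e1 e2 True by simp
  qed
qed

lemma Phi_range: assumes R: "R > 0" shows "potential_range UNIV dist R (Phi R k)"
  unfolding potential_range_def
proof (intro allI ballI impI)
  fix m and x :: "nat \<Rightarrow> real"
  assume "\<exists>i<m. \<exists>j<m. dist (x i) (x j) > R"
  then obtain i j where ij: "i < m" "j < m" "dist (x i) (x j) > R" by blast
  show "Phi R k m x = 0"
  proof (rule ccontr)
    assume "Phi R k m x \<noteq> 0"
    then have "m = k" "\<forall>i<k. x i \<in> {0..<R}" unfolding Phi_def by (auto split: if_splits)
    then have "x i \<in> {0..<R}" "x j \<in> {0..<R}" using ij by auto
    then have "dist (x i) (x j) < R" by (auto simp: dist_real_def abs_if)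
    then show False using ij by simp
  qed
qed

lemma ball_sup:
  assumes c: "c > 0" and R: "R > 0"
  shows "ball_volume_sup UNIV dist (nuc c) R = ennreal (c * (2*R))"
proof -
  have "\<And>x::real. emeasure (nuc c) {y\<in>UNIV. dist x y \<le> R} = ennreal (c * (2*R))"
  proof -
    fix x :: real
    have "{y\<in>UNIV. dist x y \<le> R} = {x - R .. x + R}" by (auto simp: dist_real_def)
    then show "emeasure (nuc c) {y\<in>UNIV. dist x y \<le> R} = ennreal (c * (2*R))"
      using c R by (simp add: nuc_def ennreal_mult[symmetric])
  qed
  then show ?thesis unfolding ball_volume_sup_def by simp
qed

lemma all_props:
  assumes c: "c > 0" and R: "R > 0" and k: "k \<ge> 2"
  shows "cs_mm_space UNIV dist (nuc c) \<and> assumption_A UNIV dist (nuc c) \<and>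
          potential_measurable (nuc c) (Phi R k) \<and> potential_symmetric UNIV (Phi R k) \<and>
          potential_repulsive UNIV (Phi R k) \<and> pure_k_body UNIV k (Phi R k) \<and>
          potential_range UNIV dist R (Phi R k) \<and>
          {0..<R} \<subseteq> UNIV \<and> Metric_space.mbounded UNIV dist {0..<R} \<and> {0..<R} \<in> sets (nuc c)"
proof (intro conjI)
  show "cs_mm_space UNIV dist (nuc c)" unfolding nuc_def by (rule csmm)
  show "assumption_A UNIV dist (nuc c)" unfolding nuc_def by (rule asmA)
  show "potential_measurable (nuc c) (Phi R k)"
    unfolding potential_measurable_def
    using Phi_meas[of "nuc c"] by (auto simp: nuc_def Phi_def)
  show "potential_symmetric UNIV (Phi R k)" by (rule Phi_sym)
  show "potential_repulsive UNIV (Phi R k)" by (simp add: potential_repulsive_def Phi_nonneg)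
  show "pure_k_body UNIV k (Phi R k)" by (simp add: pure_k_body_def Phi_other)
  show "potential_range UNIV dist R (Phi R k)" by (rule Phi_range[OF R])
  show "{0..<R} \<subseteq> UNIV" by simp
  show "Metric_space.mbounded UNIV dist {0..<(R::real)}" by simp
  show "{0..<R} \<in> sets (nuc c)" by (simp add: nuc_def)
qed



theorem mainTheorem10:
  fixes R :: real and k :: nat
  assumes "R > 0" and "k \<ge> 2"
  shows "\<exists>(X :: nat \<Rightarrow> real set) (d :: nat \<Rightarrow> real \<Rightarrow> real \<Rightarrow> real) (nu :: nat \<Rightarrow> real measure)
            (phi :: nat \<Rightarrow> real potential) (L :: nat \<Rightarrow> real set) (lam :: nat \<Rightarrow> real).
     (\<forall>n. cs_mm_space (X n) (d n) (nu n) \<and> assumption_A (X n) (d n) (nu n) \<and>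
          potential_measurable (nu n) (phi n) \<and> potential_symmetric (X n) (phi n) \<and>
          potential_repulsive (X n) (phi n) \<and> pure_k_body (X n) k (phi n) \<and>
          potential_range (X n) (d n) R (phi n) \<and>
          L n \<subseteq> X n \<and> Metric_space.mbounded (X n) (d n) (L n) \<and> L n \<in> sets (nu n) \<and>
          lam n > 0 \<and>
          partition_function_eq (nu n) (phi n) (L n) (- lam n) 0) \<and>
     (\<forall>\<^sub>F n in sequentially. ball_volume_sup (X n) (d n) (nu n) R < \<infinity>) \<and>
     filterlim (\<lambda>n. enn2real (ball_volume_sup (X n) (d n) (nu n) R)) at_top sequentially \<and>
     lam \<in> O(\<lambda>n. ln (enn2real (ball_volume_sup (X n) (d n) (nu n) R))
                 / enn2real (ball_volume_sup (X n) (d n) (nu n) R))"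
proof -
  note R = assms(1) and k = assms(2)
  define cc where "cc n = real (Suc n)" for n
  have cpos: "\<And>n. cc n > 0" by (simp add: cc_def)
  have "\<forall>n. \<exists>l. l > 0 \<and> l \<le> Tb k / (cc n * R) \<and> partition_function_eq (nuc (cc n)) (Phi R k) {0..<R} (-l) 0"
    using part_root[OF cpos R k] by blast
  then obtain lam where lam: "\<And>n. lam n > 0" "\<And>n. lam n \<le> Tb k / (cc n * R)"
     "\<And>n. partition_function_eq (nuc (cc n)) (Phi R k) {0..<R} (-lam n) 0"
    by metis
  define B where "B n = 2 * R * cc n" for n
  have Beq: "\<And>n. enn2real (ball_volume_sup UNIV dist (nuc (cc n)) R) = B n"
    using ball_sup[OF cpos R] cpos R by (simp add: B_def mult.commute mult.left_commute)
  have fin: "\<And>n. ball_volume_sup UNIV dist (nuc (cc n)) R < \<infinity>"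
    using ball_sup[OF cpos R] by simp
  have lim: "filterlim B at_top sequentially"
  proof -
    have "filterlim (\<lambda>n. real (Suc n)) at_top sequentially"
      using filterlim_real_sequentially filterlim_sequentially_Suc by blast
    then have "filterlim (\<lambda>n. (2 * R) * real (Suc n)) at_top sequentially"
      using R by (intro filterlim_tendsto_pos_mult_at_top[OF tendsto_const]) auto
    moreover have "B = (\<lambda>n. (2 * R) * real (Suc n))" by (simp add: B_def cc_def fun_eq_iff)
    ultimately show ?thesis by simp
  qed
  have bo: "lam \<in> O(\<lambda>n. ln (B n) / B n)"
  proof (rule bigoI)
    obtain N :: nat where N: "exp 1 / (2 * R) < real N" using reals_Archimedean2 by blast
    show "\<forall>\<^sub>F n in sequentially. norm (lam n) \<le> (2 * Tb k) * norm (ln (B n) / B n)"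
    proof (rule eventually_sequentiallyI[of N])
      fix n assume n: "N \<le> n"
      have Bpos: "B n > 0" using R cpos by (simp add: B_def)
      have "exp 1 < 2 * R * real N" using N R by (simp add: divide_less_eq mult.commute)
      also have "\<dots> \<le> B n" using n R by (simp add: B_def cc_def)
      finally have "exp 1 \<le> B n" by simp
      then have l1: "1 \<le> ln (B n)" using Bpos by (simp add: ln_ge_iff)
      have Tk: "Tb k \<ge> 0" by (simp add: Tb_def)
      have "norm (lam n) = lam n" using lam(1)[of n] by simp
      also have "\<dots> \<le> Tb k / (cc n * R)" by (rule lam(2))
      also have "\<dots> = (2 * Tb k) * (1 / B n)" using R cpos by (simp add: B_def field_simps)
      also have "\<dots> \<le> (2 * Tb k) * (ln (B n) / B n)"
        using l1 Bpos Tk by (intro mult_left_mono divide_right_mono) auto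
      also have "\<dots> = (2 * Tb k) * norm (ln (B n) / B n)" using l1 Bpos abs_of_nonneg[of "ln (B n)"] by (simp add: abs_of_nonneg[of "ln (B n)", OF order_trans[OF zero_le_one l1]])
      finally show "norm (lam n) \<le> (2 * Tb k) * norm (ln (B n) / B n)" .
    qed
  qed
  show ?thesis
    apply (rule exI[of _ "\<lambda>_. UNIV"], rule exI[of _ "\<lambda>_. dist"], rule exI[of _ "\<lambda>n. nuc (cc n)"],
           rule exI[of _ "\<lambda>_. Phi R k"], rule exI[of _ "\<lambda>_. {0..<R}"], rule exI[of _ lam])
    using all_props[OF cpos R k] lam fin lim bo by (simp add: Beq)
qed


end
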